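(* Neither $\mathbf{X}_6$ nor $\mathbf{X}_7$ is mutation-equivalent to any of the nine graphs $\mathbf{E}_6,\mathbf{E}_7,\mathbf{E}_8,\widehat{\mathbf{E}}_6,\widehat{\mathbf{E}}_7,\widehat{\mathbf{E}}_8,\mathbf{E}_6^{(1,1)},\mathbf{E}_7^{(1,1)},\mathbf{E}_8^{(1,1)}$.
   Context: A graph here is a finite directed multigraph with no loops and no oriented $2$-cycles; multiple arrows in the same direction are allowed. The mutation $\mu_k\Gamma$ at a vertex $k$: for every pair of arrows $i\to k$, $k\to j$ add an arrow $i\to j$; reverse all arrows incident to $k$; then delete pairs of opposite arrows $i\to j$, $j\to i$ until no oriented $2$-cycles remain. Two graphs are mutation-equivalent if one is obtained from the other by a sequence of mutations and a relabeling of vertices. $\mathbf{X}_6$: vertices $x,w,y_1,z_1,y_2,z_2$; for $i=1,2$: two arrows $y_i\to z_i$, one arrow $z_i\to x$, one arrow $x\to y_i$; plus one arrow $w\to x$. $\mathbf{X}_7$: vertices $x,y_i,z_i$ ($i=1,2,3$); for each $i=1,2,3$: two arrows $y_i\to z_i$, one arrow $z_i\to x$, one arrow $x\to y_i$. For positive integers $a,b,c$ let $T(a,b,c)$ be the tree consisting of a central vertex $o$ and three paths (arms) attached to $o$ with $a$, $b$, $c$ further vertices respectively, every arrow being a single arrow directed toward $o$ (i.e. an arm $v_m\to v_{m-1}\to\cdots\to v_1\to o$). Then $\mathbf{E}_6=T(1,2,2)$, $\mathbf{E}_7=T(1,2,3)$, $\mathbf{E}_8=T(1,2,4)$, $\widehat{\mathbf{E}}_6=T(2,2,2)$,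 $\widehat{\mathbf{E}}_7=T(1,3,3)$, $\widehat{\mathbf{E}}_8=T(1,2,5)$. For nonnegative integers $(k_1,k_2,k_3)$ let $S(k_1,k_2,k_3)$ be the graph with vertices $a,b,p_1,p_2,p_3$ and, for each $i$, vertices $t^{(i)}_1,\dots,t^{(i)}_{k_i}$, with arrows: two arrows $b\to a$; for each $i$ a single arrow $a\to p_i$ and a single arrow $p_i\to b$; and single arrows $t^{(i)}_{k_i}\to\cdots\to t^{(i)}_1\to p_i$. Then $\mathbf{E}_6^{(1,1)}=S(1,1,1)$, $\mathbf{E}_7^{(1,1)}=S(2,0,2)$, $\mathbf{E}_8^{(1,1)}=S(1,0,4)$. *)

theory Defs
  imports Main
begin

text \<open>A graph (finite directed multigraph) on the vertex set {0..<n} is encoded as a pair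
  (n, m) where m i j is the number of arrows from i to j (zero outside the vertex set).\<close>

type_synonym graph = "nat \<times> (nat \<Rightarrow> nat \<Rightarrow> nat)"

definition wf_graph :: "graph \<Rightarrow> bool" where
  "wf_graph G \<longleftrightarrow> (\<forall>i j. (fst G \<le> i \<or> fst G \<le> j) \<longrightarrow> snd G i j = 0)
      \<and> (\<forall>i. snd G i i = 0) \<and> (\<forall>i j. snd G i j = 0 \<or> snd G j i = 0)"

text \<open>Mutation at k, literally: first add an arrow i->j for every pair i->k, k->j and
  reverse all arrows at k (multiplicities premut); then cancel opposite pairs.\<close>

definition premut :: "nat \<Rightarrow> (nat \<Rightarrow> nat \<Rightarrow> nat) \<Rightarrow> nat \<Rightarrow> nat \<Rightarrow> nat" where
  "premut k m i j =
     (if i = k then m j k else if j = k then m k i else m i j + m i k * m k j)"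

definition mutate :: "nat \<Rightarrow> (nat \<Rightarrow> nat \<Rightarrow> nat) \<Rightarrow> nat \<Rightarrow> nat \<Rightarrow> nat" where
  "mutate k m i j = premut k m i j - premut k m j i"

definition mut_step :: "graph \<Rightarrow> graph \<Rightarrow> bool" where
  "mut_step G H \<longleftrightarrow> fst H = fst G \<and>
     ((\<exists>k < fst G. snd H = mutate k (snd G)) \<or>
      (\<exists>\<sigma>. bij_betw \<sigma> {..<fst G} {..<fst G}
          \<and> (\<forall>i j. i < fst G \<longrightarrow> j < fst G \<longrightarrow> snd H (\<sigma> i) (\<sigma> j) = snd G i j)
          \<and> (\<forall>i j. (fst G \<le> i \<or> fst G \<le> j) \<longrightarrow> snd H i j = 0)))"

definition mut_equiv :: "graph \<Rightarrow> graph \<Rightarrow> bool" where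
  "mut_equiv G H \<longleftrightarrow> mut_step\<^sup>*\<^sup>* G H"

definition graph_of :: "nat \<Rightarrow> (nat \<times> nat) list \<Rightarrow> graph" where
  "graph_of n es = (n, \<lambda>i j. if i < n \<and> j < n then length (filter (\<lambda>e. e = (i, j)) es) else 0)"

text \<open>A path of l vertices s+1, ..., s+l, arrows s+l -> ... -> s+1 -> r.\<close>

definition arm :: "nat \<Rightarrow> nat \<Rightarrow> nat \<Rightarrow> (nat \<times> nat) list" where
  "arm s l r = (if l = 0 then [] else [(s + 1, r)]) @ map (\<lambda>t. (s + t + 1, s + t)) [1..<l]"

text \<open>X6: x=0, w=1, y1=2, z1=3, y2=4, z2=5.\<close>
definition X6 :: graph where
  "X6 = graph_of 6 [(2,3),(2,3),(3,0),(0,2),(4,5),(4,5),(5,0),(0,4),(1,0)]"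

text \<open>X7: x=0, y1=1, z1=2, y2=3, z2=4, y3=5, z3=6.\<close>
definition X7 :: graph where
  "X7 = graph_of 7 [(1,2),(1,2),(2,0),(0,1),(3,4),(3,4),(4,0),(0,3),(5,6),(5,6),(6,0),(0,5)]"

text \<open>T(a,b,c): centre o=0, arms on 1..a, a+1..a+b, a+b+1..a+b+c.\<close>
definition Tgraph :: "nat \<Rightarrow> nat \<Rightarrow> nat \<Rightarrow> graph" where
  "Tgraph a b c = graph_of (1 + a + b + c) (arm 0 a 0 @ arm a b 0 @ arm (a + b) c 0)"

text \<open>S(k1,k2,k3): a=0, b=1, p_i = i+1 (i=1,2,3), tails starting at 5, 5+k1, 5+k1+k2.\<close>
definition Sgraph :: "nat \<Rightarrow> nat \<Rightarrow> nat \<Rightarrow> graph" where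
  "Sgraph k1 k2 k3 = graph_of (5 + k1 + k2 + k3)
     ([(1,0),(1,0),(0,2),(2,1),(0,3),(3,1),(0,4),(4,1)]
      @ arm 4 k1 2 @ arm (4 + k1) k2 3 @ arm (4 + k1 + k2) k3 4)"

end

theory Submission
  imports Defs
begin


definition rr :: "(nat\<Rightarrow>nat\<Rightarrow>nat) \<Rightarrow> nat \<Rightarrow> nat set \<Rightarrow> nat" where
  "rr m i S = (\<Sum>j\<in>S. m i j + m j i)"

definition KK :: "graph \<Rightarrow> nat set set" where
  "KK G = {S. S \<subseteq> {..<fst G} \<and> (\<forall>i<fst G. even (rr (snd G) i S))}"

definition tog :: "nat \<Rightarrow> nat set \<Rightarrow> nat set" where
  "tog k S = (if k \<in> S then S - {k} else insert k S)"

lemma sum_tog: "f k = 0 \<Longrightarrow> finite S \<Longrightarrow> sum f (tog k S) = sum f S"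
  unfolding tog_def by (auto simp: sum.remove sum.insert_remove)

lemma tog_tog: "tog k (tog k S) = S"
  unfolding tog_def by auto

lemma sum_mod2_cong:
  assumes "\<And>j. j\<in>S \<Longrightarrow> (f j::nat) mod 2 = g j mod 2"
  shows "sum f S mod 2 = sum g S mod 2"
proof -
  have "sum f S mod 2 = (\<Sum>j\<in>S. f j mod 2) mod 2" by (simp add: mod_sum_eq)
  also have "(\<Sum>j\<in>S. f j mod 2) = (\<Sum>j\<in>S. g j mod 2)" using assms by (rule sum.cong[OF refl])
  also have "(\<Sum>j\<in>S. g j mod 2) mod 2 = sum g S mod 2" by (simp add: mod_sum_eq)
  finally show ?thesis .
qed

lemma natsub_mod2: "((a::nat) - b + (b - a)) mod 2 = (a + b) mod 2"
proof -
  have "a + b = (a - b + (b - a)) + 2 * min a b" by (auto simp: min_def)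
  then show ?thesis by (metis mod_mult_self2)
qed

lemma evmod: "(x::nat) mod 2 = y mod 2 \<Longrightarrow> even x = even y"
  by (simp add: even_iff_mod_2_eq_zero)

lemma F1:
  assumes "i \<noteq> k" "m k k = 0"
  shows "even (rr (mutate k m) i S) = even (rr m i S + m i k * (\<Sum>l\<in>S. m k l) + m k i * (\<Sum>l\<in>S. m l k))"
proof -
  have "rr (mutate k m) i S mod 2 = (\<Sum>j\<in>S. m i j + m j i + m i k * m k j + m j k * m k i) mod 2"
    unfolding rr_def
  proof (rule sum_mod2_cong)
    fix j assume "j \<in> S"
    show "(mutate k m i j + mutate k m j i) mod 2 = (m i j + m j i + m i k * m k j + m j k * m k i) mod 2"
      unfolding mutate_def using natsub_mod2[of "premut k m i j" "premut k m j i"] assms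
      by (cases "j = k") (simp_all add: premut_def algebra_simps)
  qed
  also have "(\<Sum>j\<in>S. m i j + m j i + m i k * m k j + m j k * m k i) = rr m i S + m i k * (\<Sum>l\<in>S. m k l) + m k i * (\<Sum>l\<in>S. m l k)"
    unfolding rr_def by (simp add: sum.distrib sum_distrib_left algebra_simps)
  finally show ?thesis by (rule evmod)
qed

lemma F2:
  assumes "m k k = 0"
  shows "even (rr (mutate k m) k S) = even (rr m k S)"
proof -
  have "rr (mutate k m) k S mod 2 = rr m k S mod 2"
    unfolding rr_def
  proof (rule sum_mod2_cong)
    fix j assume "j \<in> S"
    show "(mutate k m k j + mutate k m j k) mod 2 = (m k j + m j k) mod 2"
      unfolding mutate_def using natsub_mod2[of "premut k m k j" "premut k m j k"] assms
      by (cases "j = k") (simp_all add: premut_def algebra_simps)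
  qed
  then show ?thesis by (rule evmod)
qed

lemma F3: "rr m k S = (\<Sum>l\<in>S. m k l) + (\<Sum>l\<in>S. m l k)"
  unfolding rr_def by (simp add: sum.distrib)

lemma F4: "m k k = 0 \<Longrightarrow> finite S \<Longrightarrow> rr m k (tog k S) = rr m k S"
  unfolding rr_def by (rule sum_tog) simp

lemma F5: assumes "finite S"
  shows "even (rr m i (tog k S)) = even (rr m i S + m i k + m k i)"
proof (cases "k \<in> S")
  case True
  then have "rr m i S = rr m i (tog k S) + (m i k + m k i)"
    unfolding rr_def tog_def using assms by (simp add: sum.remove)
  then show ?thesis by auto
next
  case False
  then have "rr m i (tog k S) = rr m i S + (m i k + m k i)"
    unfolding rr_def tog_def using assms by simp
  then show ?thesis by auto
qed

definition phi :: "(nat\<Rightarrow>nat\<Rightarrow>nat) \<Rightarrow> nat \<Rightarrow> nat set \<Rightarrow> nat set" where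
  "phi m k S = (if odd (\<Sum>l\<in>S. m k l) then tog k S else S)"

lemma phi_inv: "m k k = 0 \<Longrightarrow> finite S \<Longrightarrow> phi m k (phi m k S) = S"
  unfolding phi_def using sum_tog[of "\<lambda>l. m k l" k S] by (auto simp: tog_tog)

lemma phi_sub: "k < n \<Longrightarrow> S \<subseteq> {..<n} \<Longrightarrow> phi m k S \<subseteq> {..<n}"
  unfolding phi_def tog_def by auto

lemma key:
  assumes "k < n" "m k k = 0" "S \<subseteq> {..<n}"
  shows "(\<forall>i<n. even (rr (mutate k m) i S)) = (\<forall>i<n. even (rr m i (phi m k S)))"
proof -
  have fin: "finite S" using assms(3) finite_subset by blast
  define s where "s = (\<Sum>l\<in>S. m k l)"
  define u where "u = (\<Sum>l\<in>S. m l k)"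
  have k1: "even (rr (mutate k m) k S) = even (rr m k (phi m k S))"
    using F2[of m k S, OF assms(2)] F4[of m k S, OF assms(2) fin] by (simp add: phi_def)
  have k2: "even (rr m k (phi m k S)) = even (s + u)"
    using F4[of m k S, OF assms(2) fin] F3[of m k S] by (simp add: phi_def s_def u_def)
  have oth: "even (s + u) \<Longrightarrow> even (rr (mutate k m) i S) = even (rr m i (phi m k S))" if "i \<noteq> k" for i
  proof -
    assume e: "even (s+u)"
    have a: "even (rr (mutate k m) i S) = even (rr m i S + m i k * s + m k i * u)"
      using F1[of i k m S, OF that assms(2)] by (simp add: s_def u_def)
    have b: "even (rr m i (phi m k S)) = even (rr m i S + (if odd s then m i k + m k i else 0))"
      using F5[OF fin, of m i k] by (simp add: phi_def s_def[symmetric] add.assoc)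
    show ?thesis using a b e by auto
  qed
  show ?thesis
  proof
    assume h: "\<forall>i<n. even (rr (mutate k m) i S)"
    then have "even (s+u)" using k1 k2 assms(1) by simp
    then show "\<forall>i<n. even (rr m i (phi m k S))"
      using h oth k1 by (metis)
  next
    assume h: "\<forall>i<n. even (rr m i (phi m k S))"
    then have "even (s+u)" using k1 k2 assms(1) by simp
    then show "\<forall>i<n. even (rr (mutate k m) i S)"
      using h oth k1 by (metis)
  qed
qed

lemma card_mut:
  assumes "k < n" "m k k = 0"
  shows "card (KK (n, mutate k m)) = card (KK (n, m))"
proof -
  have "bij_betw (phi m k) (KK (n, mutate k m)) (KK (n, m))"
  proof (rule bij_betw_byWitness[where f'="phi m k"])
    show "\<forall>a\<in>KK (n, mutate k m). phi m k (phi m k a) = a"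
      using assms by (auto simp: KK_def intro!: phi_inv finite_subset[of _ "{..<n}"])
    show "\<forall>a\<in>KK (n, m). phi m k (phi m k a) = a"
      using assms by (auto simp: KK_def intro!: phi_inv finite_subset[of _ "{..<n}"])
    show "phi m k ` KK (n, mutate k m) \<subseteq> KK (n, m)"
    proof
      fix T assume "T \<in> phi m k ` KK (n, mutate k m)"
      then obtain S where S: "S \<in> KK (n, mutate k m)" "T = phi m k S" by auto
      have Ssub: "S \<subseteq> {..<n}" using S by (simp add: KK_def)
      have Tsub: "T \<subseteq> {..<n}" using S(2) phi_sub[OF assms(1) Ssub] by simp
      then show "T \<in> KK (n, m)"
        using key[of k n m S, OF assms Ssub] S by (simp add: KK_def)
    qed
    show "phi m k ` KK (n, m) \<subseteq> KK (n, mutate k m)"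
    proof
      fix T assume "T \<in> phi m k ` KK (n, m)"
      then obtain S where S: "S \<in> KK (n,m)" "T = phi m k S" by auto
      have Ssub: "S \<subseteq> {..<n}" using S by (simp add: KK_def)
      have fin: "finite S" using Ssub finite_subset by blast
      have Tsub: "T \<subseteq> {..<n}" using S(2) phi_sub[OF assms(1) Ssub] by simp
      have "phi m k T = S" using S(2) phi_inv[of m k S, OF assms(2) fin] by simp
      then show "T \<in> KK (n, mutate k m)"
        using key[of k n m T, OF assms Tsub] S(1) Tsub by (simp add: KK_def)
    qed
  qed
  then show ?thesis by (rule bij_betw_same_card)
qed



lemma card_relabel:
  assumes b: "bij_betw \<sigma> {..<n} {..<n}"
    and h: "\<forall>i j. i < n \<longrightarrow> j < n \<longrightarrow> h (\<sigma> i) (\<sigma> j) = g i j"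
  shows "card (KK (n, h)) = card (KK (n, g))"
proof -
  have inj: "inj_on \<sigma> {..<n}" using b by (simp add: bij_betw_def)
  have im: "\<sigma> ` {..<n} = {..<n}" using b by (simp add: bij_betw_def)
  have rr_eq: "rr h (\<sigma> i) (\<sigma> ` S) = rr g i S" if "i < n" "S \<subseteq> {..<n}" for i S
  proof -
    have "inj_on \<sigma> S" using inj that(2) inj_on_subset by blast
    then have "rr h (\<sigma> i) (\<sigma> ` S) = (\<Sum>j\<in>S. h (\<sigma> i) (\<sigma> j) + h (\<sigma> j) (\<sigma> i))"
      unfolding rr_def by (simp add: sum.reindex)
    also have "\<dots> = rr g i S" unfolding rr_def
      using h that by (intro sum.cong) auto
    finally show ?thesis .
  qed
  have cond: "(\<forall>i'<n. even (rr h i' (\<sigma> ` S))) = (\<forall>i<n. even (rr g i S))" if "S \<subseteq> {..<n}" for S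
  proof
    assume "\<forall>i'<n. even (rr h i' (\<sigma> ` S))"
    then show "\<forall>i<n. even (rr g i S)" using rr_eq[OF _ that] inj im by (metis imageI lessThan_iff)
  next
    assume a: "\<forall>i<n. even (rr g i S)"
    show "\<forall>i'<n. even (rr h i' (\<sigma> ` S))"
    proof (intro allI impI)
      fix i' assume "i' < n"
      then obtain i where "i < n" "i' = \<sigma> i" using im by (metis imageE lessThan_iff)
      then show "even (rr h i' (\<sigma> ` S))" using a rr_eq[OF _ that] by simp
    qed
  qed
  have eq: "KK (n, h) = image \<sigma> ` KK (n, g)"
  proof
    show "KK (n, h) \<subseteq> image \<sigma> ` KK (n, g)"
    proof
      fix S' assume S': "S' \<in> KK (n, h)"
      then have "S' \<subseteq> \<sigma> ` {..<n}" using im by (simp add: KK_def)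
      then obtain S where S: "S \<subseteq> {..<n}" "S' = \<sigma> ` S" by (meson subset_imageE)
      then have "S \<in> KK (n, g)" using S' cond[OF S(1)] by (simp add: KK_def)
      then show "S' \<in> image \<sigma> ` KK (n, g)" using S by blast
    qed
  next
    show "image \<sigma> ` KK (n, g) \<subseteq> KK (n, h)"
    proof
      fix S' assume "S' \<in> image \<sigma> ` KK (n, g)"
      then obtain S where S: "S \<in> KK (n, g)" "S' = \<sigma> ` S" by blast
      have Ss: "S \<subseteq> {..<n}" using S by (simp add: KK_def)
      then have "S' \<subseteq> {..<n}" using S(2) im by blast
      then show "S' \<in> KK (n, h)" using S cond[OF Ss] by (simp add: KK_def)
    qed
  qed
  have "inj_on (image \<sigma>) (KK (n, g))"
    using inj_on_image_Pow[OF inj] by (rule inj_on_subset) (auto simp: KK_def)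
  then show ?thesis using eq card_image by metis
qed

lemma wf_mut: "wf_graph (n, m) \<Longrightarrow> k < n \<Longrightarrow> wf_graph (n, mutate k m)"
  unfolding wf_graph_def mutate_def premut_def by auto

lemma wf_relabel:
  assumes w: "wf_graph (n, g)" and b: "bij_betw \<sigma> {..<n} {..<n}"
    and h: "\<forall>i j. i < n \<longrightarrow> j < n \<longrightarrow> h (\<sigma> i) (\<sigma> j) = g i j"
    and o: "\<forall>i j. (n \<le> i \<or> n \<le> j) \<longrightarrow> h i j = 0"
  shows "wf_graph (n, h)"
proof -
  have im: "\<sigma> ` {..<n} = {..<n}" using b by (simp add: bij_betw_def)
  have ex: "\<exists>i'<n. i = \<sigma> i'" if "i < n" for i using im that by (metis imageE lessThan_iff)
  have d: "h i i = 0" for i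
  proof (cases "i < n")
    case True then obtain i' where "i' < n" "i = \<sigma> i'" using ex by blast
    then show ?thesis using h w by (simp add: wf_graph_def)
  qed (use o in auto)
  have a: "h i j = 0 \<or> h j i = 0" for i j
  proof (cases "i < n \<and> j < n")
    case True then obtain i' j' where "i' < n" "i = \<sigma> i'" "j' < n" "j = \<sigma> j'" using ex by blast
    then show ?thesis using h w by (simp add: wf_graph_def)
  qed (use o in auto)
  show ?thesis using o d a by (simp add: wf_graph_def)
qed

lemma invariant:
  assumes "mut_equiv G H" "wf_graph G"
  shows "fst H = fst G \<and> wf_graph H \<and> card (KK H) = card (KK G)"
  using assms(1) unfolding mut_equiv_def
proof (induction rule: rtranclp_induct)
  case base then show ?case using assms(2) by simp
next
  case (step H H')
  obtain n m where Hd: "H = (n, m)" by (cases H)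
  obtain n' m' where H'd: "H' = (n', m')" by (cases H')
  have wH: "wf_graph (n, m)" using step.IH unfolding Hd by blast
  from step(2) have nn: "n' = n" and alt: "(\<exists>k < n. m' = mutate k m) \<or>
      (\<exists>\<sigma>. bij_betw \<sigma> {..<n} {..<n}
          \<and> (\<forall>i j. i < n \<longrightarrow> j < n \<longrightarrow> m' (\<sigma> i) (\<sigma> j) = m i j)
          \<and> (\<forall>i j. (n \<le> i \<or> n \<le> j) \<longrightarrow> m' i j = 0))"
    unfolding mut_step_def Hd H'd by auto
  have "wf_graph (n, m') \<and> card (KK (n, m')) = card (KK (n, m))"
    using alt
  proof
    assume "\<exists>k < n. m' = mutate k m"
    then obtain k where "k < n" "m' = mutate k m" by blast
    moreover have "m k k = 0" using wH by (simp add: wf_graph_def)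
    ultimately show ?thesis using wf_mut[OF wH] card_mut by simp
  next
    assume "\<exists>\<sigma>. bij_betw \<sigma> {..<n} {..<n}
          \<and> (\<forall>i j. i < n \<longrightarrow> j < n \<longrightarrow> m' (\<sigma> i) (\<sigma> j) = m i j)
          \<and> (\<forall>i j. (n \<le> i \<or> n \<le> j) \<longrightarrow> m' i j = 0)"
    then obtain \<sigma> where "bij_betw \<sigma> {..<n} {..<n}"
          "\<forall>i j. i < n \<longrightarrow> j < n \<longrightarrow> m' (\<sigma> i) (\<sigma> j) = m i j"
          "\<forall>i j. (n \<le> i \<or> n \<le> j) \<longrightarrow> m' i j = 0" by blast
    then show ?thesis using wf_relabel[OF wH] card_relabel by metis
  qed
  moreover have "n = fst G" "card (KK (n, m)) = card (KK G)" using step.IH unfolding Hd by auto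
  ultimately show ?case unfolding H'd nn by simp
qed


lemma KK_cond:
  assumes "S \<in> KK (n,m)"
  shows "S \<subseteq> {..<n}" "\<forall>i<n. even (\<Sum>j<n. if j\<in>S then m i j + m j i else 0)"
proof -
  show s: "S \<subseteq> {..<n}" using assms by (simp add: KK_def)
  have "S = {..<n} \<inter> S" using s by blast
  then have "rr m i S = (\<Sum>j<n. if j\<in>S then m i j + m j i else 0)" for i
    unfolding rr_def by (metis (no_types) finite_lessThan sum.inter_restrict)
  then show "\<forall>i<n. even (\<Sum>j<n. if j\<in>S then m i j + m j i else 0)"
    using assms by (simp add: KK_def)
qed

lemma lt6: "{..<6::nat} = {0,1,2,3,4,5}" by auto
lemma all6: "(\<forall>i<(6::nat). P i) = (P 0 \<and> P 1 \<and> P 2 \<and> P 3 \<and> P 4 \<and> P 5)"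
  by (metis lessThan_iff lt6 insert_iff empty_iff)

lemma lt7: "{..<7::nat} = {0,1,2,3,4,5,6}" by auto
lemma all7: "(\<forall>i<(7::nat). P i) = (P 0 \<and> P 1 \<and> P 2 \<and> P 3 \<and> P 4 \<and> P 5 \<and> P 6)"
  by (metis lessThan_iff lt7 insert_iff empty_iff)

lemma T122: "Tgraph 1 2 2 = graph_of 6 [(1,0),(2,0),(3,2),(4,0),(5,4)]"
  by (simp add: Tgraph_def arm_def upt_conv_Cons numeral_eq_Suc)
lemma T123: "Tgraph 1 2 3 = graph_of 7 [(1,0),(2,0),(3,2),(4,0),(5,4),(6,5)]"
  by (simp add: Tgraph_def arm_def upt_conv_Cons numeral_eq_Suc)
lemma T222: "Tgraph 2 2 2 = graph_of 7 [(1,0),(2,1),(3,0),(4,3),(5,0),(6,5)]"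
  by (simp add: Tgraph_def arm_def upt_conv_Cons numeral_eq_Suc)

lemma E6: assumes "S \<in> KK (Tgraph 1 2 2)" shows "S = {}"
proof -
  note a = assms[unfolded T122 graph_of_def]
  have s: "S \<subseteq> {..<6}" using KK_cond(1)[OF a] .
  have "0\<notin>S \<and> 1\<notin>S \<and> 2\<notin>S \<and> 3\<notin>S \<and> 4\<notin>S \<and> 5\<notin>S" using KK_cond(2)[OF a]
    by (simp add: all6 lt6 cong: if_cong split: if_split_asm)
  then show ?thesis using s lt6 by auto
qed

lemma E7: assumes "S \<in> KK (Tgraph 1 2 3)" shows "S = {} \<or> S = {1,4,6}"
proof -
  note a = assms[unfolded T123 graph_of_def]
  have s: "S \<subseteq> {..<7}" using KK_cond(1)[OF a] .
  have "0\<notin>S \<and> 2\<notin>S \<and> 3\<notin>S \<and> 5\<notin>S \<and> (1\<in>S \<longleftrightarrow> 4\<in>S) \<and> (4\<in>S \<longleftrightarrow> 6\<in>S)" using KK_cond(2)[OF a]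
    by (simp add: all7 lt7 cong: if_cong split: if_split_asm)
  then show ?thesis using s lt7 by auto
qed

lemma hE6: assumes "S \<in> KK (Tgraph 2 2 2)" shows "S = {} \<or> S = {0,2,4,6}"
proof -
  note a = assms[unfolded T222 graph_of_def]
  have s: "S \<subseteq> {..<7}" using KK_cond(1)[OF a] .
  have "1\<notin>S \<and> 3\<notin>S \<and> 5\<notin>S \<and> (0\<in>S \<longleftrightarrow> 2\<in>S) \<and> (2\<in>S \<longleftrightarrow> 4\<in>S) \<and> (4\<in>S \<longleftrightarrow> 6\<in>S)" using KK_cond(2)[OF a]
    by (simp add: all7 lt7 cong: if_cong split: if_split_asm)
  then show ?thesis using s lt7 by auto
qed

lemma X6_mem: "{} \<in> KK X6" "{1,2} \<in> KK X6"
  by (simp_all add: KK_def rr_def X6_def graph_of_def all6)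

lemma X7_mem: "{} \<in> KK X7" "{1,3} \<in> KK X7" "{3,5} \<in> KK X7"
  by (simp_all add: KK_def rr_def X7_def graph_of_def all7)

lemma wf_graph_of:
  assumes "\<forall>i<n. \<forall>j<n. (length (filter (\<lambda>e. e = (i, j)) es) = 0 \<or> length (filter (\<lambda>e. e = (j, i)) es) = 0)"
  shows "wf_graph (graph_of n es)"
  using assms unfolding wf_graph_def graph_of_def by auto

lemma wfX6: "wf_graph X6" unfolding X6_def by (rule wf_graph_of) (simp add: all6)
lemma wfX7: "wf_graph X7" unfolding X7_def by (rule wf_graph_of) (simp add: all7)


lemma finKK: "finite (KK G)"
  by (rule finite_subset[of _ "Pow {..<fst G}"]) (auto simp: KK_def)

lemma cX6: "card (KK X6) \<ge> 2"
proof -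
  have "card {{}, {1::nat,2}} \<le> card (KK X6)" using X6_mem finKK by (intro card_mono) auto
  then show ?thesis by simp
qed

lemma cX7: "card (KK X7) \<ge> 3"
proof -
  have "card {{}, {1::nat,3}, {3,5}} \<le> card (KK X7)" using X7_mem finKK by (intro card_mono) auto
  moreover have "{1::nat,3} \<noteq> {3,5}"
  proof
    assume "{1::nat,3} = {3,5}"
    then have "(1::nat) \<in> {3,5}" by (metis insertI1)
    then show False by simp
  qed
  ultimately show ?thesis by simp
qed

lemma cE6: "card (KK (Tgraph 1 2 2)) \<le> 1"
proof -
  have "KK (Tgraph 1 2 2) \<subseteq> {{}}" using E6 by blast
  then have "card (KK (Tgraph 1 2 2)) \<le> card {{}::nat set}" by (intro card_mono) auto
  then show ?thesis by simp
qed

lemma cE7: "card (KK (Tgraph 1 2 3)) \<le> 2"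
proof -
  have "KK (Tgraph 1 2 3) \<subseteq> {{}, {1,4,6}}" using E7 by blast
  then have "card (KK (Tgraph 1 2 3)) \<le> card {{}, {1::nat,4,6}}" by (intro card_mono) auto
  then show ?thesis by simp
qed

lemma chE6: "card (KK (Tgraph 2 2 2)) \<le> 2"
proof -
  have "KK (Tgraph 2 2 2) \<subseteq> {{}, {0,2,4,6}}" using hE6 by blast
  then have "card (KK (Tgraph 2 2 2)) \<le> card {{}, {0::nat,2,4,6}}" by (intro card_mono) auto
  then show ?thesis by simp
qed

lemma fstT: "fst (Tgraph a b c) = 1 + a + b + c" by (simp add: Tgraph_def graph_of_def)
lemma fstS: "fst (Sgraph a b c) = 5 + a + b + c" by (simp add: Sgraph_def graph_of_def)
lemma fstX: "fst X6 = 6" "fst X7 = 7" by (simp_all add: X6_def X7_def graph_of_def)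

theorem mainTheorem2:
  shows "\<forall>G \<in> {X6, X7}. \<forall>H \<in> {Tgraph 1 2 2, Tgraph 1 2 3, Tgraph 1 2 4,
            Tgraph 2 2 2, Tgraph 1 3 3, Tgraph 1 2 5,
            Sgraph 1 1 1, Sgraph 2 0 2, Sgraph 1 0 4}. \<not> mut_equiv G H"
proof (intro ballI notI)
  fix G H assume G: "G \<in> {X6, X7}" and H: "H \<in> {Tgraph 1 2 2, Tgraph 1 2 3, Tgraph 1 2 4,
            Tgraph 2 2 2, Tgraph 1 3 3, Tgraph 1 2 5,
            Sgraph 1 1 1, Sgraph 2 0 2, Sgraph 1 0 4}" and e: "mut_equiv G H"
  have w: "wf_graph G" using G wfX6 wfX7 by auto
  note i = invariant[OF e w]
  from G consider "G = X6" | "G = X7" by blast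
  then show False
  proof cases
    case 1
    then have a: "fst H = 6" "card (KK H) \<ge> 2" using i fstX cX6 by auto
    from H consider "H = Tgraph 1 2 2" | "fst H \<noteq> 6" by (auto simp: fstT fstS)
    then show False using a cE6 by cases auto
  next
    case 2
    then have a: "fst H = 7" "card (KK H) \<ge> 3" using i fstX cX7 by auto
    from H consider "H = Tgraph 1 2 3" | "H = Tgraph 2 2 2" | "fst H \<noteq> 7" by (auto simp: fstT fstS)
    then show False using a cE7 chE6 by cases auto
  qed
qed


end
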